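(* Let $G=(V,E)$ be a complete (directed or undirected) graph on $n$ vertices with cost function $c: V\times V\to\mathbb{R}$, and let $k,l$ be integers with $1\le k<l\le n$. Suppose there are no vertices $a,b,w\in V$ with $b\neq w$ and $c(a,b)=c(a,w)$. Then the length of the tour returned by $l$-RNN on $G$ is less than or equal to the length of the tour returned by $k$-RNN on $G$.
   Context: A tour is an ordering $T=(v_1,\dots,v_n)$ of all vertices of $V$ (a Hamiltonian cycle); its length is $\sum_{i=1}^{n-1} c(v_i,v_{i+1}) + c(v_n,v_1)$. For an integer $k\ge 1$, the $k$-Repetitive-Nearest-Neighbor ($k$-RNN) algorithm works as follows. Step 1: for every ordered sequence $(v_1,\dots,v_k)$ of $k$ distinct vertices, form the partial tour $T=(v_1,\dots,v_k)$ and mark these vertices visited. Step 2: set $i=k$; while unvisited vertices remain, let $v_{i+1}$ be an unvisited vertex minimizing $c(v_i,\cdot)$ over unvisited vertices (if there are several, any one is chosen), append $v_{i+1}$ to $T$, mark it visited, and increment $i$. Step 3: among all $\frac{n!}{(n-k)!}$ tours so constructed, return one of minimum length. The result of a run is the length of the returned tour. *)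

theory Defs
  imports Complex_Main
begin

definition tour_length :: "('a \<Rightarrow> 'a \<Rightarrow> real) \<Rightarrow> 'a list \<Rightarrow> real" where
  "tour_length c T = (\<Sum>i<length T - 1. c (T ! i) (T ! (i + 1))) + c (last T) (hd T)"

text \<open>T is a tour of V that can be produced by Step 2 of k-RNN from its first k
  vertices: every vertex at (0-based) position i >= k is an unvisited vertex minimizing
  the cost from the previous vertex (ties may be broken arbitrarily).\<close>
definition nn_tour :: "'a set \<Rightarrow> ('a \<Rightarrow> 'a \<Rightarrow> real) \<Rightarrow> nat \<Rightarrow> 'a list \<Rightarrow> bool" where
  "nn_tour V c k T \<longleftrightarrow> distinct T \<and> set T = V \<and>
     (\<forall>i. k \<le> i \<and> i < length T \<longrightarrow>
        (\<forall>x \<in> V - set (take i T). c (T ! (i - 1)) (T ! i) \<le> c (T ! (i - 1)) x))"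

definition start_seqs :: "'a set \<Rightarrow> nat \<Rightarrow> 'a list set" where
  "start_seqs V k = {p. distinct p \<and> set p \<subseteq> V \<and> length p = k}"

text \<open>r is a possible result of a run of k-RNN: for each starting sequence one tour is
  constructed (with some tie-breaking), and the minimum tour length is returned.\<close>
definition rnn_result :: "'a set \<Rightarrow> ('a \<Rightarrow> 'a \<Rightarrow> real) \<Rightarrow> nat \<Rightarrow> real \<Rightarrow> bool" where
  "rnn_result V c k r \<longleftrightarrow>
     (\<exists>f. (\<forall>p \<in> start_seqs V k. take k (f p) = p \<and> nn_tour V c k (f p)) \<and>
          r = Min ((\<lambda>p. tour_length c (f p)) ` start_seqs V k))"

end

theory Submission
  imports Defs
begin

lemma nn_len: "nn_tour V c k T \<Longrightarrow> finite V \<Longrightarrow> length T = card V"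
  unfolding nn_tour_def by (metis distinct_card)

lemma nn_mono: "nn_tour V c k T \<Longrightarrow> k \<le> l \<Longrightarrow> nn_tour V c l T"
  unfolding nn_tour_def by auto

lemma nn_unique:
  assumes fin: "finite V" and nt: "\<not> (\<exists>a\<in>V. \<exists>b\<in>V. \<exists>w\<in>V. b \<noteq> w \<and> c a b = c a w)"
    and l1: "1 \<le> l" and t1: "nn_tour V c l T1" and t2: "nn_tour V c l T2"
    and tk: "take l T1 = take l T2"
  shows "T1 = T2"
proof -
  have len: "length T1 = length T2" using nn_len[OF t1 fin] nn_len[OF t2 fin] by simp
  have "\<forall>i \<le> length T1. take i T1 = take i T2"
  proof (intro allI impI)
    fix i assume "i \<le> length T1"
    then show "take i T1 = take i T2"
    proof (induction i)
      case 0 then show ?case by simp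
    next
      case (Suc i)
      have IH: "take i T1 = take i T2" using Suc by simp
      have ilt: "i < length T1" using Suc by simp
      show ?case
      proof (cases "i < l")
        case True
        have "take (Suc i) T1 = take (Suc i) (take l T1)" using True by simp
        also have "\<dots> = take (Suc i) (take l T2)" using tk by simp
        also have "\<dots> = take (Suc i) T2" using True by simp
        finally show ?thesis .
      next
        case False
        hence il: "l \<le> i" by simp
        have d1: "distinct T1" and s1: "set T1 = V" using t1 unfolding nn_tour_def by auto
        have d2: "distinct T2" and s2: "set T2 = V" using t2 unfolding nn_tour_def by auto
        have ilt2: "i < length T2" using ilt len by simp
        have m1: "T1 ! i \<in> V - set (take i T1)"
          using d1 s1 ilt by (auto simp: in_set_conv_nth nth_eq_iff_index_eq)
        have m2: "T2 ! i \<in> V - set (take i T2)"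
          using d2 s2 ilt2 by (auto simp: in_set_conv_nth nth_eq_iff_index_eq)
        have prev: "T1 ! (i - 1) = T2 ! (i - 1)"
        proof -
          have "i - 1 < i" using il l1 by simp
          hence "T1 ! (i - 1) = take i T1 ! (i - 1)" "T2 ! (i - 1) = take i T2 ! (i - 1)"
            by simp_all
          thus ?thesis using IH by simp
        qed
        have a: "c (T1 ! (i - 1)) (T1 ! i) \<le> c (T1 ! (i - 1)) (T2 ! i)"
          using t1 il ilt m2 IH unfolding nn_tour_def by auto
        have b: "c (T2 ! (i - 1)) (T2 ! i) \<le> c (T2 ! (i - 1)) (T1 ! i)"
          using t2 il ilt2 m1 IH unfolding nn_tour_def by auto
        have aV: "T1 ! (i - 1) \<in> V" using s1 ilt by auto
        have "c (T1 ! (i - 1)) (T1 ! i) = c (T1 ! (i - 1)) (T2 ! i)" using a b prev by simp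
        hence eq: "T1 ! i = T2 ! i" using nt aV m1 m2 by blast
        show ?thesis using IH eq ilt ilt2 by (simp add: take_Suc_conv_app_nth)
      qed
    qed
  qed
  thus ?thesis using len by (metis order_refl take_all)
qed

lemma start_fin: "finite V \<Longrightarrow> finite (start_seqs V k)"
proof -
  assume f: "finite V"
  have "start_seqs V k \<subseteq> {xs. set xs \<subseteq> V \<and> length xs = k}" unfolding start_seqs_def by auto
  thus ?thesis using finite_lists_length_eq[OF f] finite_subset by blast
qed

lemma start_ne: "finite V \<Longrightarrow> k \<le> card V \<Longrightarrow> start_seqs V k \<noteq> {}"
proof -
  assume f: "finite V" and k: "k \<le> card V"
  obtain xs where "set xs = V" "distinct xs" using finite_distinct_list[OF f] by blast
  hence "take k xs \<in> start_seqs V k" using k unfolding start_seqs_def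
    by (auto simp: distinct_card dest: in_set_takeD)
  thus ?thesis by blast
qed

theorem theorem1:
  fixes V :: "'a set" and c :: "'a \<Rightarrow> 'a \<Rightarrow> real" and n k l :: nat and rk rl :: real
  assumes "finite V" and "card V = n"
    and "1 \<le> k" and "k < l" and "l \<le> n"
    and "\<not> (\<exists>a\<in>V. \<exists>b\<in>V. \<exists>w\<in>V. b \<noteq> w \<and> c a b = c a w)"
    and "rnn_result V c l rl" and "rnn_result V c k rk"
  shows "rl \<le> rk"
proof -
  obtain fl where fl: "\<forall>p \<in> start_seqs V l. take l (fl p) = p \<and> nn_tour V c l (fl p)"
    and rl: "rl = Min ((\<lambda>p. tour_length c (fl p)) ` start_seqs V l)"
    using assms(7) unfolding rnn_result_def by blast
  obtain fk where fk: "\<forall>p \<in> start_seqs V k. take k (fk p) = p \<and> nn_tour V c k (fk p)"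
    and rk: "rk = Min ((\<lambda>p. tour_length c (fk p)) ` start_seqs V k)"
    using assms(8) unfolding rnn_result_def by blast
  have "rk \<in> (\<lambda>p. tour_length c (fk p)) ` start_seqs V k"
    unfolding rk using start_fin[OF assms(1)] start_ne[OF assms(1)] assms
    by (intro Min_in) auto
  then obtain p where p: "p \<in> start_seqs V k" and rkp: "rk = tour_length c (fk p)" by blast
  define T where "T = fk p"
  have tk: "nn_tour V c k T" using fk p T_def by simp
  have tl: "nn_tour V c l T" using nn_mono[OF tk] assms(4) by simp
  have lenT: "length T = n" using nn_len[OF tk assms(1)] assms(2) by simp
  define q where "q = take l T"
  have q: "q \<in> start_seqs V l" using tk lenT assms(5) unfolding q_def start_seqs_def nn_tour_def
    by (auto dest: in_set_takeD)
  have "fl q = T"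
    using nn_unique[OF assms(1) assms(6), of l "fl q" T] fl q assms(3,4) tl q_def by auto
  hence "rl \<le> tour_length c T"
    unfolding rl using start_fin[OF assms(1)] q by (metis Min_le finite_imageI image_eqI)
  thus ?thesis using rkp T_def by simp
qed

end
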